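(* Let $n$ be a positive integer, $k\ge2$ an integer, and $\beta$ an integer with $0\le\beta\le k-1$. Then $$\det_{0\le i,j\le n-1}\bigl(C_{(k-1)i+j+\beta,k}+C_{(k-1)i+j+\beta+1,k}\bigr)=\sum_{s=0}^{n}\binom{\lfloor\frac{s+\beta}{k-1}\rfloor+n}{n-s}.$$
   Context: For integers $k\ge2$ and $m\ge0$, the generalised Catalan number is $$C_{m,k}=\frac{m-(k-1)\lfloor\frac{m}{k-1}\rfloor+1}{m+\lfloor\frac{m}{k-1}\rfloor+1}\binom{m+\lfloor\frac{m}{k-1}\rfloor+1}{m+1}.$$ *)

theory Defs
  imports "Jordan_Normal_Form.Determinant"
begin

definition gen_catalan :: "nat \<Rightarrow> nat \<Rightarrow> rat" where
  "gen_catalan m k =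
     (let q = m div (k - 1) in
      (of_nat (m - (k - 1) * q + 1) / of_nat (m + q + 1)) * of_nat ((m + q + 1) choose (m + 1)))"

end

theory Submission
  imports Defs
begin


fun Q :: "nat \<Rightarrow> nat \<Rightarrow> nat \<Rightarrow> nat \<Rightarrow> nat" where
  "Q r g 0 0 = 1"
| "Q r g (Suc u) 0 = Q r g u 0"
| "Q r g 0 (Suc d) = (if g < r * Suc d then 0 else Q r g 0 d)"
| "Q r g (Suc u) (Suc d) = (if g + Suc u < r * Suc d then 0 else Q r g u (Suc d) + Q r g (Suc u) d)"

lemma Q_zero: "g + u < r * d \<Longrightarrow> Q r g u d = 0"
  by (cases u; cases d) auto

lemma Q_d0[simp]: "Q r g u 0 = 1"
  by (induction u) auto

lemma Q_u0: "Q r g 0 d = (if r * d \<le> g then 1 else 0)"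
  by (induction d) auto

lemma bdry: assumes "r * Suc d = Suc u"
  shows "((u + Suc d) choose Suc d) = r * ((u + Suc d) choose d)"
proof -
  have "Suc d * ((u + Suc d) choose Suc d) = (u + Suc d) * ((u + d) choose d)"
    using times_binomial_minus1_eq[of "Suc d" "u + Suc d"] by simp
  also have "(u + Suc d) * ((u + d) choose d) = (u + Suc d - d) * ((u + Suc d) choose d)"
    using binomial_absorb_comp[of "u + Suc d" d] by simp
  also have "u + Suc d - d = r * Suc d" using assms by simp
  finally have "Suc d * ((u + Suc d) choose Suc d) = Suc d * (r * ((u + Suc d) choose d))"
    by (metis mult.assoc mult.commute)
  then show ?thesis by (metis Suc_neq_Zero mult_left_cancel)
qed

definition cf :: "nat \<Rightarrow> nat \<Rightarrow> nat \<Rightarrow> int" where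
  "cf r u d = (if d = 0 then 1 else int ((u + d) choose d) - int r * int ((u + d) choose (d - 1)))"

lemma Q_closed: "r * d \<le> Suc u \<Longrightarrow> int (Q r 0 u d) = cf r u d"
proof (induction u arbitrary: d)
  case 0
  then show ?case
  proof (cases d)
    case 0 then show ?thesis by (simp add: cf_def)
  next
    case (Suc d')
    then have "r * Suc d' \<le> 1" using 0 by simp
    then have "r = 0 \<or> (r = 1 \<and> d' = 0)" 
      by (metis One_nat_def Suc_leI Suc_le_mono le_antisym mult_0_right mult_is_0 mult_le_cancel1 nat_mult_eq_1_iff not_less_eq_eq zero_less_Suc)
    then show ?thesis using Suc by (auto simp: cf_def Q_u0)
  qed
next
  case (Suc u)
  note IHu = Suc.IH
  show ?case using Suc.prems
  proof (induction d)
    case 0 then show ?case by (simp add: cf_def)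
  next
    case (Suc d)
    show ?case
    proof (cases "Suc u < r * Suc d")
      case True
      then have eq: "r * Suc d = Suc (Suc u)" using Suc.prems by linarith
      then have "((Suc u + Suc d) choose Suc d) = r * ((Suc u + Suc d) choose d)" by (rule bdry)
      then show ?thesis using True by (simp add: cf_def)
    next
      case False
      then have a: "int (Q r 0 u (Suc d)) = cf r u (Suc d)" using IHu[of "Suc d"] by simp
      have b: "int (Q r 0 (Suc u) d) = cf r (Suc u) d" using Suc.prems Suc.IH False
        by simp
      have "Q r 0 (Suc u) (Suc d) = Q r 0 u (Suc d) + Q r 0 (Suc u) d" using False by simp
      then have "int (Q r 0 (Suc u) (Suc d)) = cf r u (Suc d) + cf r (Suc u) d" using a b by simp
      also have "\<dots> = cf r (Suc u) (Suc d)"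
      proof (cases d)
        case 0 then show ?thesis by (simp add: cf_def)
      next
        case (Suc d')
        have p1: "(Suc u + Suc d choose Suc d) = (u + Suc d choose Suc d) + (u + Suc d choose d)"
          by simp
        have p2: "(Suc u + Suc d choose d) = (u + Suc d choose d) + (Suc u + d choose d')"
          using Suc by simp
        show ?thesis using Suc p1 p2 by (simp add: cf_def algebra_simps)
      qed
      finally show ?thesis .
    qed
  qed
qed

lemma cf_identity:
  fixes n q r :: nat
  assumes "r * q \<le> n"
  shows "of_int (cf r n q) * (of_nat (n + q + 1) :: rat) = of_nat (n - r * q + 1) * of_nat ((n + q + 1) choose q)"
proof (cases q)
  case 0 then show ?thesis by (simp add: cf_def)
next
  case (Suc q')
  define X where "X = (n + q) choose q"
  define Y where "Y = (n + q) choose q'"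
  define B where "B = (n + q + 1) choose q"
  have i1: "(n + 1) * B = (n + q + 1) * X"
    using binomial_absorb_comp[of "n + q + 1" q] unfolding X_def B_def by simp
  have i2: "q * X = (n + 1) * Y"
  proof -
    have e: "n + q = Suc (q' + n)" using Suc by simp
    have "Suc q' * (Suc (q' + n) choose Suc q') = Suc n * (Suc (q' + n) choose q')"
      by (rule Suc_times_binomial_add)
    then show ?thesis unfolding X_def Y_def e using Suc by (simp del: binomial_Suc_Suc)
  qed
  have cf: "cf r n q = int X - int r * int Y" unfolding cf_def X_def Y_def Suc by simp
  define b :: rat where "b = of_nat B"
  define x :: rat where "x = of_nat X"
  define y :: rat where "y = of_nat Y"
  have i1': "(of_nat n + 1) * b = (of_nat n + of_nat q + 1) * x" unfolding b_def x_def
    using arg_cong[OF i1, of "of_nat :: nat \<Rightarrow> rat"] by (simp add: algebra_simps)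
  have i2': "of_nat q * x = (of_nat n + 1) * y" unfolding y_def x_def
    using arg_cong[OF i2, of "of_nat :: nat \<Rightarrow> rat"] by (simp add: algebra_simps)
  have sub: "of_nat (n - r * q + 1) = (of_nat n - of_nat r * of_nat q + 1 :: rat)"
    using assms by (simp add: of_nat_diff)
  have cf': "(of_int (cf r n q) :: rat) = x - of_nat r * y" unfolding cf x_def y_def by simp
  have "(of_nat n + 1) * (of_int (cf r n q) * (of_nat (n + q + 1) :: rat)) = (of_nat n+1) * ((of_nat n + of_nat q + 1) * x) - of_nat r * ((of_nat n + of_nat q + 1) * ((of_nat n+1) * y))"
    unfolding cf' by (simp add: algebra_simps)
  also have "\<dots> = (of_nat n+1) * ((of_nat n + 1) * b) - of_nat r * ((of_nat n + of_nat q + 1) * (of_nat q * x))" using i1' i2' by simp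
  also have "\<dots> = (of_nat n+1) * ((of_nat n + 1) * b) - of_nat r * of_nat q * ((of_nat n + 1) * b)" using i1' by (simp add: algebra_simps)
  also have "\<dots> = (of_nat n + 1) * ((of_nat n - of_nat r * of_nat q + 1) * b)" by (simp add: algebra_simps)
  finally have "(of_nat n + 1) * (of_int (cf r n q) * (of_nat (n + q + 1) :: rat)) = (of_nat n + 1) * ((of_nat n - of_nat r * of_nat q + 1) * b)" .
  then have "of_int (cf r n q) * (of_nat (n + q + 1) :: rat) = (of_nat n - of_nat r * of_nat q + 1) * b"
    by (metis mult_cancel_left of_nat_Suc Suc_eq_plus1 of_nat_eq_0_iff nat.distinct(1) add.commute)
  then show ?thesis unfolding sub b_def B_def by simp
qed

lemma gen_catalan_Q:
  assumes "k \<ge> 2"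
  shows "gen_catalan n k = of_nat (Q (k - 1) 0 n (n div (k - 1)))"
proof -
  define r where "r = k - 1"
  define q where "q = n div r"
  have rq: "r * q \<le> n" unfolding q_def by simp
  have "of_nat (Q r 0 n q) = (of_int (cf r n q) :: rat)"
    using Q_closed[of r q n] rq by (metis le_SucI of_int_of_nat_eq)
  also have "\<dots> = of_nat (n - r * q + 1) / of_nat (n + q + 1) * of_nat ((n + q + 1) choose q)"
    using cf_identity[OF rq] by (simp add: field_simps)
  also have "(n + q + 1) choose q = (n + q + 1) choose (n + 1)"
    using binomial_symmetric[of q "n + q + 1"] by simp
  finally show ?thesis unfolding gen_catalan_def Let_def r_def[symmetric] q_def[symmetric]
    by simp
qed

lemma Q_pos_bound: "Q r g u d \<noteq> 0 \<Longrightarrow> r * d \<le> g + u"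
  using Q_zero by (meson not_le)

lemma term_step:
  assumes "d1 \<le> D'" "r * d1 \<le> g + u"
  shows "Q r (g + u + 1 - r * d1) (Suc t) (Suc D' - d1) =
    (if g + u + 1 + Suc t < r * Suc D' then 0 else
      Q r (g + u + 1 - r * d1) t (Suc D' - d1) + Q r (g + u + 1 - r * d1) (Suc t) (D' - d1))"
proof -
  have e: "Suc D' - d1 = Suc (D' - d1)" using assms by simp
  have m: "r * Suc (D' - d1) = r * Suc D' - r * d1" using assms
    by (simp add: Suc_diff_le diff_mult_distrib2)
  have m2: "r * d1 \<le> r * Suc D'" using mult_le_mono2[of d1 "Suc D'" r] assms(1) by linarith
  have "(g + u + 1 - r * d1 + Suc t < r * Suc (D' - d1)) = (g + u + 1 + Suc t < r * Suc D')"
    unfolding m using assms m2 by linarith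
  then show ?thesis unfolding e by simp
qed

lemma term_base:
  assumes "d1 \<le> D" "r * d1 \<le> g + u"
  shows "Q r (g + u + 1 - r * d1) 0 (D - d1) = (if r * D \<le> g + u + 1 then 1 else 0)"
proof -
  have m: "r * (D - d1) = r * D - r * d1" by (simp add: diff_mult_distrib2)
  have m2: "r * d1 \<le> r * D" using assms by simp
  have "(r * (D - d1) \<le> g + u + 1 - r * d1) = (r * D \<le> g + u + 1)"
    unfolding m using assms m2 by linarith
  then show ?thesis by (simp add: Q_u0)
qed

lemma concat_base:
  "Q r g (Suc u) D = (\<Sum>d1 = 0..D. Q r g u d1 * Q r (g + u + 1 - r * d1) 0 (D - d1))"
proof (induction D)
  case 0 then show ?case by (simp add: Q_u0)
next
  case (Suc D)
  have T: "\<And>d1. d1 \<le> Suc D \<Longrightarrow> Q r g u d1 * Q r (g + u + 1 - r * d1) 0 (Suc D - d1)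
      = (if r * Suc D \<le> g + u + 1 then Q r g u d1 else 0)"
  proof -
    fix d1 assume d1: "d1 \<le> Suc D"
    show "Q r g u d1 * Q r (g + u + 1 - r * d1) 0 (Suc D - d1)
      = (if r * Suc D \<le> g + u + 1 then Q r g u d1 else 0)"
    proof (cases "Q r g u d1 = 0")
      case True then show ?thesis by simp
    next
      case False
      then have "r * d1 \<le> g + u" by (rule Q_pos_bound)
      note tb = term_base[OF d1 this]
      show ?thesis unfolding tb by simp
    qed
  qed
  have T2: "\<And>d1. d1 \<le> D \<Longrightarrow> Q r g u d1 * Q r (g + u + 1 - r * d1) 0 (D - d1)
      = (if r * D \<le> g + u + 1 then Q r g u d1 else 0)"
  proof -
    fix d1 assume d1: "d1 \<le> D"
    show "Q r g u d1 * Q r (g + u + 1 - r * d1) 0 (D - d1)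
      = (if r * D \<le> g + u + 1 then Q r g u d1 else 0)"
    proof (cases "Q r g u d1 = 0")
      case True then show ?thesis by simp
    next
      case False
      then have "r * d1 \<le> g + u" by (rule Q_pos_bound)
      note tb = term_base[OF d1 this]
      show ?thesis unfolding tb by simp
    qed
  qed
  have R: "(\<Sum>d1 = 0..Suc D. Q r g u d1 * Q r (g + u + 1 - r * d1) 0 (Suc D - d1))
     = (\<Sum>d1 = 0..Suc D. if r * Suc D \<le> g + u + 1 then Q r g u d1 else 0)"
    by (rule sum.cong[OF refl], rule T) simp
  have IH': "Q r g (Suc u) D = (\<Sum>d1 = 0..D. if r * D \<le> g + u + 1 then Q r g u d1 else 0)"
    unfolding Suc.IH by (rule sum.cong[OF refl], rule T2) simp
  show ?case
  proof (cases "r * Suc D \<le> g + u + 1")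
    case True
    then have "r * D \<le> g + u + 1" by simp
    then show ?thesis unfolding R using True IH' by simp
  next
    case False
    then show ?thesis unfolding R by simp
  qed
qed

lemma concat:
  "Q r g (u + 1 + t) D = (\<Sum>d1 = 0..D. Q r g u d1 * Q r (g + u + 1 - r * d1) t (D - d1))"
proof (induction t arbitrary: D)
  case 0 then show ?case using concat_base by simp
next
  case (Suc t)
  note IHt = Suc.IH
  show ?case
  proof (induction D)
    case 0 then show ?case by simp
  next
    case (Suc D')
    let ?G = "g + u + 1 + Suc t < r * Suc D'"
    let ?h = "\<lambda>d1. g + u + 1 - r * d1"
    have T: "\<And>d1. d1 \<le> D' \<Longrightarrow> Q r g u d1 * Q r (?h d1) (Suc t) (Suc D' - d1) =
       (if ?G then 0 else Q r g u d1 * Q r (?h d1) t (Suc D' - d1) + Q r g u d1 * Q r (?h d1) (Suc t) (D' - d1))"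
    proof -
      fix d1 assume d1: "d1 \<le> D'"
      show "Q r g u d1 * Q r (?h d1) (Suc t) (Suc D' - d1) =
       (if ?G then 0 else Q r g u d1 * Q r (?h d1) t (Suc D' - d1) + Q r g u d1 * Q r (?h d1) (Suc t) (D' - d1))"
      proof (cases "Q r g u d1 = 0")
        case True then show ?thesis by simp
      next
        case False
        then have "r * d1 \<le> g + u" by (rule Q_pos_bound)
        note ts = term_step[OF d1 this, of t]
        show ?thesis unfolding ts by (simp add: distrib_left)
      qed
    qed
    have last: "Q r g u (Suc D') * Q r (?h (Suc D')) (Suc t) (Suc D' - Suc D') = Q r g u (Suc D') * Q r (?h (Suc D')) t (Suc D' - Suc D')"
      by simp
    show ?case
    proof (cases ?G)
      case True
      have lz: "Q r g u (Suc D') = 0" using True by (intro Q_zero) simp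
      have "(\<Sum>d1 = 0..Suc D'. Q r g u d1 * Q r (?h d1) (Suc t) (Suc D' - d1)) = 0"
        using T True lz by (simp add: sum.atLeast0_atMost_Suc)
      then show ?thesis using True by simp
    next
      case False
      have "Q r g (u + 1 + Suc t) (Suc D') = Q r g (u + 1 + t) (Suc D') + Q r g (u + 1 + Suc t) D'"
        using False by simp
      also have "\<dots> = (\<Sum>d1 = 0..Suc D'. Q r g u d1 * Q r (?h d1) t (Suc D' - d1))
          + (\<Sum>d1 = 0..D'. Q r g u d1 * Q r (?h d1) (Suc t) (D' - d1))"
        using IHt[of "Suc D'"] Suc.IH by simp
      also have "\<dots> = (\<Sum>d1 = 0..D'. Q r g u d1 * Q r (?h d1) t (Suc D' - d1) + Q r g u d1 * Q r (?h d1) (Suc t) (D' - d1))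
          + Q r g u (Suc D') * Q r (?h (Suc D')) t (Suc D' - Suc D')"
        by (simp add: sum.atLeast0_atMost_Suc sum.distrib)
      also have "\<dots> = (\<Sum>d1 = 0..Suc D'. Q r g u d1 * Q r (?h d1) (Suc t) (Suc D' - d1))"
        using T False by (simp add: sum.atLeast0_atMost_Suc)
      finally show ?thesis .
    qed
  qed
qed

definition R :: "nat \<Rightarrow> nat \<Rightarrow> nat \<Rightarrow> nat" where
  "R r t g = Q r g t ((g + t) div r)"

lemma R0[simp]: "R r 0 g = 1"
  unfolding R_def by (simp add: Q_u0)

lemma div_shift: fixes x r d1 :: nat assumes "0 < r" "r * d1 \<le> x" shows "(x - r * d1) div r = x div r - d1"
proof -
  have "x = (x - r * d1) + r * d1" using assms by simp
  then have "x div r = (x - r * d1) div r + d1" using assms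
    by (metis div_mult_self2 not_gr0 add.commute)
  then show ?thesis by simp
qed

lemma R_unf: assumes "0 < r"
  shows "R r (Suc t) g = (\<Sum>d1 = 0..g div r. R r t (g + 1 - r * d1))"
proof -
  define D where "D = (g + Suc t) div r"
  have "R r (Suc t) g = Q r g (0 + 1 + t) D" unfolding R_def D_def by simp
  also have "\<dots> = (\<Sum>d1 = 0..D. Q r g 0 d1 * Q r (g + 0 + 1 - r * d1) t (D - d1))"
    by (rule concat)
  also have "\<dots> = (\<Sum>d1 = 0..D. if d1 \<le> g div r then R r t (g + 1 - r * d1) else 0)"
  proof (rule sum.cong[OF refl])
    fix d1 assume "d1 \<in> {0..D}"
    show "Q r g 0 d1 * Q r (g + 0 + 1 - r * d1) t (D - d1) = (if d1 \<le> g div r then R r t (g + 1 - r * d1) else 0)"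
    proof (cases "d1 \<le> g div r")
      case True
      then have rd: "r * d1 \<le> g" using assms less_eq_div_iff_mult_less_eq[of r d1 g] by (simp add: mult.commute)
      have "(g + 1 - r * d1 + t) div r = (g + Suc t - r * d1) div r" using rd by simp
      also have "\<dots> = D - d1" unfolding D_def using rd assms by (intro div_shift) auto
      finally show ?thesis using True rd unfolding R_def by (simp add: Q_u0)
    next
      case False
      then have "\<not> r * d1 \<le> g" using assms less_eq_div_iff_mult_less_eq[of r d1 g] by (simp add: mult.commute)
      then show ?thesis using False by (simp add: Q_u0)
    qed
  qed
  also have "\<dots> = (\<Sum>d1 = 0..g div r. R r t (g + 1 - r * d1))"
  proof -
    have le: "g div r \<le> D" unfolding D_def by (simp add: div_le_mono)
    have "{0..D} \<inter> {x. x \<le> g div r} = {0..g div r}" using le by auto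
    then show ?thesis by (simp add: sum.If_cases)
  qed
  finally show ?thesis .
qed

lemma R_rec: assumes "0 < r"
  shows "R r (Suc t) g = R r t (Suc g) + (if r \<le> g then R r (Suc t) (g - r) else 0)"
proof (cases "r \<le> g")
  case False
  then have "g div r = 0" by simp
  then show ?thesis using R_unf[OF assms] False by simp
next
  case True
  define m where "m = (g - r) div r"
  have gm: "g div r = Suc m" unfolding m_def using True assms
    by (metis Suc_eq_plus1 add.commute div_add_self1 le_add_diff_inverse not_gr0)
  have "R r (Suc t) g = (\<Sum>d1 = 0..Suc m. R r t (g + 1 - r * d1))" using R_unf[OF assms] gm by simp
  also have "\<dots> = R r t (g + 1) + (\<Sum>d1 = Suc 0..Suc m. R r t (g + 1 - r * d1))"
    by (simp add: sum.atLeast_Suc_atMost)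
  also have "(\<Sum>d1 = Suc 0..Suc m. R r t (g + 1 - r * d1)) = (\<Sum>d1 = 0..m. R r t (g + 1 - r * Suc d1))"
    by (rule sum.shift_bounds_cl_Suc_ivl)
  also have "\<dots> = (\<Sum>d1 = 0..m. R r t (g - r + 1 - r * d1))"
    using True by (intro sum.cong refl) (simp add: algebra_simps)
  also have "\<dots> = R r (Suc t) (g - r)" using R_unf[OF assms, of t "g - r"] unfolding m_def by simp
  finally show ?thesis using True by simp
qed

definition Fs :: "nat \<Rightarrow> nat \<Rightarrow> nat \<Rightarrow> int \<Rightarrow> rat" where
  "Fs r g M C = (\<Sum>t = 0..M. (-1)^t * ((of_int (int ((t + g) div r) + C) :: rat) gchoose (M - t)) * of_nat (R r t g))"

lemma Fs_Suc: assumes "0 < r"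
  shows "Fs r g (Suc M) C = (of_int (int (g div r) + C) gchoose Suc M) - Fs r (Suc g) M C
     + (if r \<le> g then Fs r (g - r) (Suc M) (C + 1) - (of_int (int (g div r) + C) gchoose Suc M) else 0)"
proof -
  define a where "a = (\<lambda>t. (-1::rat)^(Suc t) * (of_int (int ((Suc t + g) div r) + C) gchoose (M - t)))"
  have "Fs r g (Suc M) C = (of_int (int (g div r) + C) gchoose Suc M)
      + (\<Sum>t = 0..M. a t * of_nat (R r (Suc t) g))"
    unfolding Fs_def a_def sum.atLeast0_atMost_Suc_shift by (simp del: sum.atLeast0_atMost_Suc)
  also have "(\<Sum>t = 0..M. a t * of_nat (R r (Suc t) g)) = (\<Sum>t = 0..M. a t * of_nat (R r t (Suc g)))
      + (\<Sum>t = 0..M. a t * (if r \<le> g then of_nat (R r (Suc t) (g - r)) else 0))"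
  proof -
    have e: "\<And>t. (of_nat (R r (Suc t) g) :: rat) = of_nat (R r t (Suc g)) + (if r \<le> g then of_nat (R r (Suc t) (g - r)) else 0)"
      by (subst R_rec[OF assms]) simp
    show ?thesis by (simp only: e) (simp add: sum.distrib[symmetric] distrib_left)
  qed
  also have "(\<Sum>t = 0..M. a t * of_nat (R r t (Suc g))) = - Fs r (Suc g) M C"
    unfolding Fs_def a_def by (simp add: sum_negf[symmetric])
  also have "(\<Sum>t = 0..M. a t * (if r \<le> g then of_nat (R r (Suc t) (g - r)) else 0))
      = (if r \<le> g then Fs r (g - r) (Suc M) (C + 1) - (of_int (int (g div r) + C) gchoose Suc M) else 0)"
  proof (cases "r \<le> g")
    case False then show ?thesis by simp
  next
    case True
    have d1: "\<And>t. (Suc t + g) div r = Suc ((Suc t + (g - r)) div r)"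
    proof -
      fix t have "Suc t + g = (Suc t + (g - r)) + r" using True by simp
      moreover have "\<And>x::nat. (x + r) div r = Suc (x div r)" using assms by simp
      ultimately show "(Suc t + g) div r = Suc ((Suc t + (g - r)) div r)" by metis
    qed
    have d1': "\<And>t. Suc (t + g) div r = Suc (Suc (t + (g - r)) div r)" using d1 by simp
    have d0: "g div r = Suc ((g - r) div r)"
    proof -
      have "g = (g - r) + r" using True by simp
      then show ?thesis using assms by (metis div_add_self2 not_gr0 Suc_eq_plus1)
    qed
    have "Fs r (g - r) (Suc M) (C + 1) = (of_int (int (g div r) + C) gchoose Suc M)
         + (\<Sum>t = 0..M. a t * of_nat (R r (Suc t) (g - r)))"
      unfolding Fs_def a_def sum.atLeast0_atMost_Suc_shift by (simp del: sum.atLeast0_atMost_Suc add: d0 d1' algebra_simps)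
    then show ?thesis using True by simp
  qed
  finally show ?thesis by simp
qed

lemma Fs_closed: assumes "0 < r"
  shows "Fs r g M C = (-1)^M * (of_int (int M - C) gchoose M)"
proof (induction M arbitrary: g C)
  case 0 then show ?case by (simp add: Fs_def)
next
  case (Suc M)
  note IHM = Suc.IH
  show ?case
  proof (induction g arbitrary: C rule: less_induct)
    case (less g)
    have pas: "(of_int (int (Suc M) - C) :: rat) gchoose Suc M = (of_int (int M - C) gchoose M) + (of_int (int M - C) gchoose Suc M)"
      using gbinomial_Suc_Suc[of "of_int (int M - C) :: rat" M] by (simp add: algebra_simps)
    show ?case
    proof (cases "r \<le> g")
      case True
      have "Fs r g (Suc M) C = - Fs r (Suc g) M C + Fs r (g - r) (Suc M) (C + 1)"
        using Fs_Suc[OF assms] True by simp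
      also have "\<dots> = - ((-1)^M * (of_int (int M - C) gchoose M)) + (-1)^(Suc M) * (of_int (int (Suc M) - (C + 1)) gchoose Suc M)"
        using IHM less.IH[of "g - r" "C + 1"] True assms by simp
      also have "\<dots> = (-1)^(Suc M) * (of_int (int (Suc M) - C) gchoose Suc M)"
        unfolding pas by (simp add: algebra_simps)
      finally show ?thesis .
    next
      case False
      then have g0: "g div r = 0" by simp
      have neg: "(of_int C :: rat) gchoose Suc M = (-1)^(Suc M) * (of_int (int M - C) gchoose Suc M)"
        using gbinomial_negated_upper[of "of_int C :: rat" "Suc M"] by (simp add: algebra_simps)
      have "Fs r g (Suc M) C = (of_int C gchoose Suc M) - Fs r (Suc g) M C"
        using Fs_Suc[OF assms] False g0 by simp
      also have "\<dots> = (of_int C gchoose Suc M) - ((-1)^M * (of_int (int M - C) gchoose M))"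
        using IHM by simp
      also have "\<dots> = (-1)^(Suc M) * (of_int (int (Suc M) - C) gchoose Suc M)"
        unfolding pas neg by (simp add: algebra_simps)
      finally show ?thesis .
    qed
  qed
qed


definition U :: "nat \<Rightarrow> nat \<Rightarrow> nat \<Rightarrow> nat" where
  "U r i a = (if i = 0 then (if a = 0 then 1 else 0) else Q r 0 (r * i - 1) (i - a))"

lemma U_diag: "U r i i = 1"
  unfolding U_def by simp

lemma factor: assumes "0 < r"
  shows "R r (r * i + t) 0 = (\<Sum>a = 0..i. U r i a * R r t (r * a))"
proof (cases "i = 0")
  case True then show ?thesis by (simp add: U_def)
next
  case False
  define D where "D = (r * i + t) div r"
  have D: "D = i + t div r" unfolding D_def using assms by simp
  have u: "r * i - 1 + 1 + t = r * i + t" using False assms by simp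
  have "R r (r * i + t) 0 = Q r 0 (r * i - 1 + 1 + t) D" unfolding R_def D_def u by simp
  also have "\<dots> = (\<Sum>d1 = 0..D. Q r 0 (r * i - 1) d1 * Q r (0 + (r * i - 1) + 1 - r * d1) t (D - d1))"
    by (rule concat)
  also have "\<dots> = (\<Sum>d1 = 0..D. if d1 \<le> i then U r i (i - d1) * R r t (r * (i - d1)) else 0)"
  proof (rule sum.cong[OF refl])
    fix d1 assume "d1 \<in> {0..D}"
    show "Q r 0 (r * i - 1) d1 * Q r (0 + (r * i - 1) + 1 - r * d1) t (D - d1)
      = (if d1 \<le> i then U r i (i - d1) * R r t (r * (i - d1)) else 0)"
    proof (cases "d1 \<le> i")
      case True
      have h: "0 + (r * i - 1) + 1 - r * d1 = r * (i - d1)" using False assms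
        by (simp add: diff_mult_distrib2)
      have dd: "D - d1 = (r * (i - d1) + t) div r" unfolding D using True assms by simp
      show ?thesis using True False unfolding h dd U_def R_def by simp
    next
      case False
      then have "r * Suc i \<le> r * d1" by (intro mult_le_mono2) simp
      then have "r * i - 1 < r * d1" using assms by simp
      then have "Q r 0 (r * i - 1) d1 = 0" by (intro Q_zero) simp
      then show ?thesis using False by simp
    qed
  qed
  also have "\<dots> = (\<Sum>d1 = 0..i. U r i (i - d1) * R r t (r * (i - d1)))"
  proof -
    have le: "i \<le> D" unfolding D by simp
    have "{0..D} \<inter> {x. x \<le> i} = {0..i}" using le by auto
    then show ?thesis by (simp add: sum.If_cases)
  qed
  also have "\<dots> = (\<Sum>a = 0..i. U r i a * R r t (r * a))"
    using sum.atLeastAtMost_rev[of "\<lambda>a. U r i a * R r t (r * a)" 0 i] by simp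
  finally show ?thesis .
qed


lemma G_closed:
  assumes r: "0 < r" and b: "\<beta> \<le> r"
  shows "(\<Sum>s = 0..m. (-1)^s * of_nat (((s + \<beta>) div r + m) choose (m - s)) * of_nat (R r (s + \<beta>) (r * a)))
       = (-1)^m * (of_nat ((a + \<beta>) choose (m + \<beta>)) :: rat)"
proof -
  define f where "f = (\<lambda>t. (-1)^t * ((of_int (int ((t + r * a) div r) + (int m - int a)) :: rat) gchoose (m + \<beta> - t)) * of_nat (R r t (r * a)))"
  have "Fs r (r * a) (m + \<beta>) (int m - int a) = (-1)^(m + \<beta>) * (of_int (int (m + \<beta>) - (int m - int a)) gchoose (m + \<beta>))"
    by (rule Fs_closed[OF r])
  also have "(of_int (int (m + \<beta>) - (int m - int a)) :: rat) = of_nat (a + \<beta>)" by simp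
  finally have F1: "Fs r (r * a) (m + \<beta>) (int m - int a) = (-1)^(m + \<beta>) * of_nat ((a + \<beta>) choose (m + \<beta>))"
    by (simp add: binomial_gbinomial)
  have "Fs r (r * a) (m + \<beta>) (int m - int a) = sum f {0..m + \<beta>}" unfolding Fs_def f_def by simp
  also have "{0..m + \<beta>} = {0..<\<beta>} \<union> {0 + \<beta>..m + \<beta>}" by auto
  also have "sum f ({0..<\<beta>} \<union> {0 + \<beta>..m + \<beta>}) = sum f {0..<\<beta>} + sum f {0 + \<beta>..m + \<beta>}"
    by (rule sum.union_disjoint) auto
  also have "sum f {0..<\<beta>} = 0"
  proof (rule sum.neutral, rule ballI)
    fix t assume t: "t \<in> {0..<\<beta>}"
    then have "t < r" using b by simp
    then have "(t + r * a) div r = a" using r by simp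
    then have top: "(of_int (int ((t + r * a) div r) + (int m - int a)) :: rat) = of_nat m" by simp
    have "m choose (m + \<beta> - t) = 0" using t by simp
    then show "f t = 0" unfolding f_def top by (simp add: binomial_gbinomial[symmetric])
  qed
  also have "sum f {0 + \<beta>..m + \<beta>} = (\<Sum>s = 0..m. f (s + \<beta>))"
    by (rule sum.shift_bounds_cl_nat_ivl)
  also have "\<dots> = (-1)^\<beta> * (\<Sum>s = 0..m. (-1)^s * of_nat (((s + \<beta>) div r + m) choose (m - s)) * of_nat (R r (s + \<beta>) (r * a)))"
  proof -
    have "\<And>s. f (s + \<beta>) = (-1)^\<beta> * ((-1)^s * of_nat (((s + \<beta>) div r + m) choose (m - s)) * of_nat (R r (s + \<beta>) (r * a)))"
    proof -
      fix s
      have d: "(s + \<beta> + r * a) div r = (s + \<beta>) div r + a" using r by simp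
      have top: "(of_int (int ((s + \<beta> + r * a) div r) + (int m - int a)) :: rat) = of_nat ((s + \<beta>) div r + m)"
        unfolding d by simp
      have k: "m + \<beta> - (s + \<beta>) = m - s" by simp
      show "f (s + \<beta>) = (-1)^\<beta> * ((-1)^s * of_nat (((s + \<beta>) div r + m) choose (m - s)) * of_nat (R r (s + \<beta>) (r * a)))"
        unfolding f_def top k by (simp add: binomial_gbinomial power_add)
    qed
    then show ?thesis by (simp add: sum_distrib_left)
  qed
  finally have "(-1)^\<beta> * (\<Sum>s = 0..m. (-1)^s * of_nat (((s + \<beta>) div r + m) choose (m - s)) * of_nat (R r (s + \<beta>) (r * a)))
       = (-1)^(m + \<beta>) * (of_nat ((a + \<beta>) choose (m + \<beta>)) :: rat)" using F1 by simp
  then have eq: "(-1)^\<beta> * X = (-1)^\<beta> * ((-1)^m * Y)" if "X = (\<Sum>s = 0..m. (-1)^s * of_nat (((s + \<beta>) div r + m) choose (m - s)) * of_nat (R r (s + \<beta>) (r * a)))"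
     and "Y = (of_nat ((a + \<beta>) choose (m + \<beta>)) :: rat)" for X Y using that by (simp add: power_add mult_ac)
  have pb: "(-1::rat)^\<beta> * (-1)^\<beta> = 1" by (induction \<beta>) auto
  have "\<And>X Y::rat. (-1)^\<beta> * X = (-1)^\<beta> * Y \<Longrightarrow> X = Y"
  proof -
    fix X Y :: rat assume "(-1)^\<beta> * X = (-1)^\<beta> * Y"
    then have "(-1)^\<beta> * ((-1)^\<beta> * X) = (-1)^\<beta> * ((-1)^\<beta> * Y)" by simp
    then show "X = Y" using pb by (simp add: mult.assoc[symmetric])
  qed
  then show ?thesis using eq by blast
qed


lemma KI:
  assumes r: "0 < r" and b: "\<beta> \<le> r" and im: "i \<le> m"
  shows "(\<Sum>s = 0..m. (-1)^s * of_nat (((s + \<beta>) div r + m) choose (m - s)) * of_nat (R r (r * i + s + \<beta>) 0))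
       = (if i = m then (-1)^m else (0::rat))"
proof -
  let ?x = "\<lambda>s. (-1)^s * (of_nat (((s + \<beta>) div r + m) choose (m - s)) :: rat)"
  have "(\<Sum>s = 0..m. ?x s * of_nat (R r (r * i + s + \<beta>) 0))
      = (\<Sum>s = 0..m. ?x s * (\<Sum>a = 0..i. of_nat (U r i a) * of_nat (R r (s + \<beta>) (r * a))))"
  proof (rule sum.cong[OF refl])
    fix s
    have "R r (r * i + (s + \<beta>)) 0 = (\<Sum>a = 0..i. U r i a * R r (s + \<beta>) (r * a))" by (rule factor[OF r])
    then show "?x s * of_nat (R r (r * i + s + \<beta>) 0) = ?x s * (\<Sum>a = 0..i. of_nat (U r i a) * of_nat (R r (s + \<beta>) (r * a)))"
      by (simp add: add.assoc)
  qed
  also have "\<dots> = (\<Sum>a = 0..i. of_nat (U r i a) * (\<Sum>s = 0..m. ?x s * of_nat (R r (s + \<beta>) (r * a))))"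
    by (simp add: sum_distrib_left sum_distrib_right mult_ac sum.swap[of _ "{0..i}"])
  also have "\<dots> = (\<Sum>a = 0..i. of_nat (U r i a) * ((-1)^m * of_nat ((a + \<beta>) choose (m + \<beta>))))"
    using G_closed[OF r b] by (simp add: mult.assoc)
  also have "\<dots> = (\<Sum>a = 0..i. if a = m then (-1)^m else 0)"
  proof (rule sum.cong[OF refl])
    fix a assume "a \<in> {0..i}"
    then have a: "a \<le> m" using im by simp
    show "of_nat (U r i a) * ((-1)^m * of_nat ((a + \<beta>) choose (m + \<beta>))) = (if a = m then (-1)^m else (0::rat))"
    proof (cases "a = m")
      case True
      then have "i = m" using \<open>a \<in> {0..i}\<close> im by simp
      then show ?thesis using True by (simp add: U_diag)
    next
      case False
      then have "a + \<beta> < m + \<beta>" using a by simp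
      then show ?thesis using False by simp
    qed
  qed
  also have "\<dots> = (if i = m then (-1)^m else 0)"
    using im by (simp add: sum.delta)
  finally show ?thesis by (simp add: mult.assoc)
qed

lemma cat_R: assumes "k \<ge> 2" shows "gen_catalan n k = of_nat (R (k - 1) n 0)"
  using gen_catalan_Q[OF assms] unfolding R_def by simp



lemma det_mat0: "det (mat 0 0 f) = (1::'a::comm_ring_1)"
  by (simp add: det_def)

lemma prod_list_ones: "(\<And>i. i < m \<Longrightarrow> f i = 1) \<Longrightarrow> prod_list (map f [0..<m]) = (1::'a::monoid_mult)"
  by (induction m) auto

lemma det_step:
  fixes c :: "nat \<Rightarrow> nat \<Rightarrow> rat" and xx :: "nat \<Rightarrow> rat"
  assumes K: "\<And>i. i \<le> n \<Longrightarrow> (\<Sum>s = 0..n. xx s * c i s) = (if i = n then (-1)^n else 0)"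
  and xn: "xx n = (-1)^n"
  shows "det (mat (Suc n) (Suc n) (\<lambda>(i,j). c i j)) = det (mat n n (\<lambda>(i,j). c i j))"
proof -
  define A where "A = mat (Suc n) (Suc n) (\<lambda>(i,j). c i j)"
  define X where "X = mat (Suc n) (Suc n) (\<lambda>(l,j). if j = n then xx l else if l = j then 1 else (0::rat))"
  define M where "M = mat (Suc n) (Suc n) (\<lambda>(i,j). if j = n then (if i = n then (-1)^n else 0) else c i j)"
  have A: "A \<in> carrier_mat (Suc n) (Suc n)" and X: "X \<in> carrier_mat (Suc n) (Suc n)"
    and Mc: "M \<in> carrier_mat (Suc n) (Suc n)" unfolding A_def X_def M_def by auto
  have detX: "det X = (-1)^n"
  proof -
    have ut: "upper_triangular X" unfolding X_def upper_triangular_def by auto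
    have "det X = prod_list (diag_mat X)" by (rule det_upper_triangular[OF ut X])
    also have "diag_mat X = map (\<lambda>i. X $$ (i,i)) [0..<n] @ [X $$ (n,n)]"
      unfolding diag_mat_def X_def by simp
    also have "prod_list \<dots> = X $$ (n,n)"
      using prod_list_ones[of n "\<lambda>i. X $$ (i,i)"] unfolding X_def by simp
    also have "\<dots> = (-1)^n" unfolding X_def using xn by simp
    finally show ?thesis .
  qed
  have AX: "A * X = M"
  proof (rule eq_matI)
    fix i j assume i: "i < dim_row M" and j: "j < dim_col M"
    then have i': "i < Suc n" and j': "j < Suc n" unfolding M_def by auto
    have "(A * X) $$ (i,j) = (\<Sum>l \<in> {0..<Suc n}. c i l * X $$ (l,j))"
      using i' j' unfolding A_def X_def by (simp add: scalar_prod_def)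
    also have "\<dots> = M $$ (i,j)"
    proof (cases "j = n")
      case True
      have "(\<Sum>l \<in> {0..<Suc n}. c i l * X $$ (l,j)) = (\<Sum>s = 0..n. xx s * c i s)"
        using True unfolding X_def by (intro sum.cong) (auto simp: mult.commute)
      also have "\<dots> = (if i = n then (-1)^n else 0)" using K i' by simp
      finally show ?thesis using True i' j' unfolding M_def by simp
    next
      case False
      have "(\<Sum>l \<in> {0..<Suc n}. c i l * X $$ (l,j)) = (\<Sum>l \<in> {0..<Suc n}. if l = j then c i l else 0)"
        using False j' unfolding X_def by (intro sum.cong) auto
      also have "\<dots> = c i j" using j' by (simp add: sum.delta)
      finally show ?thesis using False i' j' unfolding M_def by simp
    qed
    finally show "(A * X) $$ (i,j) = M $$ (i,j)" .
  qed (auto simp: A_def X_def M_def)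
  have "det M = (\<Sum>i<Suc n. M $$ (i,n) * cofactor M i n)"
    by (rule laplace_expansion_column[OF Mc]) simp
  also have "\<dots> = M $$ (n,n) * cofactor M n n"
  proof -
    have "(\<Sum>i<n. M $$ (i,n) * cofactor M i n) = 0"
      by (rule sum.neutral) (auto simp: M_def)
    then show ?thesis by simp
  qed
  also have "mat_delete M n n = mat n n (\<lambda>(i,j). c i j)"
    unfolding mat_delete_def M_def by (rule eq_matI) auto
  then have "cofactor M n n = det (mat n n (\<lambda>(i,j). c i j))"
    unfolding cofactor_def by (simp add: power_add[symmetric] mult_2[symmetric] power_mult)
  finally have "det M = (-1)^n * det (mat n n (\<lambda>(i,j). c i j))" unfolding M_def by simp
  moreover have "det M = det A * (-1)^n" unfolding AX[symmetric] detX[symmetric] by (rule det_mult[OF A X])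
  ultimately have "det A * (-1)^n = (-1)^n * det (mat n n (\<lambda>(i,j). c i j))" by simp
  then show ?thesis unfolding A_def by simp
qed


lemma neg1_sq: "(-1::rat)^m * (-1)^m = 1"
  by (induction m) auto

lemma main_det:
  fixes c :: "nat \<Rightarrow> nat \<Rightarrow> rat" and b :: "nat \<Rightarrow> rat"
  assumes n: "n = Suc n'"
  and K: "\<And>i. i < n \<Longrightarrow> (\<Sum>s = 0..n. (-1)^s * b s * c i s) = 0"
  and bn: "b n = 1"
  and dA: "det (mat n n (\<lambda>(i,j). c i j)) = 1"
  shows "det (mat n n (\<lambda>(i,j). c i j + c i (Suc j))) = (\<Sum>s = 0..n. b s)"
proof -
  define y where "y = (\<lambda>l. - ((-1)^n * ((-1)^l * b l)))"
  define An where "An = mat n n (\<lambda>(i,j). c i j)"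
  define G where "G = mat n n (\<lambda>(l,j). (if l = j then 1 else 0) + (if l = Suc j then 1 else 0) + (if j = n' then y l else (0::rat)))"
  define L where "L = mat n n (\<lambda>(l,p). if p \<le> l then (-1::rat)^(l-p) else 0)"
  have An: "An \<in> carrier_mat n n" and Gc: "G \<in> carrier_mat n n" and Lc: "L \<in> carrier_mat n n"
    unfolding An_def G_def L_def by auto
  have ker: "\<And>i. i < n \<Longrightarrow> (\<Sum>l \<in> {0..<n}. c i l * y l) = c i n"
  proof -
    fix i assume i: "i < n"
    have "(\<Sum>s = 0..n. (-1)^s * b s * c i s) = (\<Sum>s \<in> {0..<n}. (-1)^s * b s * c i s) + (-1)^n * c i n"
      using bn by (simp add: atLeastLessThanSuc_atLeastAtMost[symmetric])
    then have e: "(\<Sum>s \<in> {0..<n}. (-1)^s * b s * c i s) = - ((-1)^n * c i n)" using K[OF i] by simp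
    have "(\<Sum>l \<in> {0..<n}. c i l * y l) = - ((-1)^n * (\<Sum>s \<in> {0..<n}. (-1)^s * b s * c i s))"
      unfolding y_def by (simp add: sum_distrib_left sum_negf[symmetric] mult_ac)
    also have "\<dots> = ((-1)^n * (-1)^n) * c i n" unfolding e by simp
    also have "\<dots> = c i n" by (simp add: neg1_sq)
    finally show "(\<Sum>l \<in> {0..<n}. c i l * y l) = c i n" .
  qed
  have AG: "mat n n (\<lambda>(i,j). c i j + c i (Suc j)) = An * G"
  proof (rule eq_matI)
    fix i j assume i: "i < dim_row (An * G)" and j: "j < dim_col (An * G)"
    then have i': "i < n" and j': "j < n" unfolding An_def G_def by auto
    have "(An * G) $$ (i,j) = (\<Sum>l \<in> {0..<n}. c i l * G $$ (l,j))"
      using i' j' unfolding An_def G_def by (simp add: scalar_prod_def)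
    also have "\<dots> = (\<Sum>l \<in> {0..<n}. (if l = j then c i l else 0) + (if l = Suc j then c i l else 0) + (if j = n' then c i l * y l else 0))"
      using j' unfolding G_def by (intro sum.cong) (auto simp: distrib_left)
    also have "\<dots> = c i j + (if Suc j < n then c i (Suc j) else 0) + (if j = n' then (\<Sum>l \<in> {0..<n}. c i l * y l) else 0)"
      using j' by (simp add: sum.distrib sum.delta)
    also have "\<dots> = c i j + c i (Suc j)"
      using ker[OF i'] j' n by auto
    finally show "mat n n (\<lambda>(i,j). c i j + c i (Suc j)) $$ (i,j) = (An * G) $$ (i,j)" using i' j' by simp
  qed (auto simp: An_def G_def)
  have detL: "det L = 1"
  proof -
    have "det L = prod_list (diag_mat L)"
      by (rule det_lower_triangular[OF _ Lc]) (auto simp: L_def)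
    also have "\<dots> = 1" unfolding diag_mat_def L_def by (auto intro!: prod_list_ones)
    finally show ?thesis .
  qed
  define d where "d = 1 + (\<Sum>p \<in> {0..<n}. (-1::rat)^(n' - p) * y p)"
  have LGent: "\<And>l j. l < n \<Longrightarrow> j < n \<Longrightarrow> (L * G) $$ (l,j) =
      (if j \<le> l then (-1)^(l-j) else 0) + (if Suc j < n \<and> Suc j \<le> l then (-1)^(l - Suc j) else 0)
      + (if j = n' then (\<Sum>p \<in> {0..<n}. (if p \<le> l then (-1)^(l-p) else 0) * y p) else 0)"
  proof -
    fix l j assume l: "l < n" and j: "j < n"
    have "(L * G) $$ (l,j) = (\<Sum>p \<in> {0..<n}. L $$ (l,p) * G $$ (p,j))"
      using l j unfolding L_def G_def by (simp add: scalar_prod_def)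
    also have "\<dots> = (\<Sum>p \<in> {0..<n}. (if p = j then (if j \<le> l then (-1)^(l-j) else 0) else 0)
        + (if p = Suc j then (if Suc j \<le> l then (-1)^(l - Suc j) else 0) else 0)
        + (if j = n' then (if p \<le> l then (-1)^(l-p) else 0) * y p else 0))"
      using l j unfolding L_def G_def by (intro sum.cong) (auto simp: distrib_left)
    also have "\<dots> = (if j \<le> l then (-1)^(l-j) else 0) + (if Suc j < n \<and> Suc j \<le> l then (-1)^(l - Suc j) else 0)
      + (if j = n' then (\<Sum>p \<in> {0..<n}. (if p \<le> l then (-1)^(l-p) else 0) * y p) else 0)"
      using j by (simp add: sum.distrib sum.delta)
    finally show "(L * G) $$ (l,j) = (if j \<le> l then (-1)^(l-j) else 0) + (if Suc j < n \<and> Suc j \<le> l then (-1)^(l - Suc j) else 0)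
      + (if j = n' then (\<Sum>p \<in> {0..<n}. (if p \<le> l then (-1)^(l-p) else 0) * y p) else 0)" .
  qed
  have LGc: "L * G \<in> carrier_mat n n" using Lc Gc by auto
  have ut: "upper_triangular (L * G)"
  proof (unfold upper_triangular_def, intro allI impI)
    fix l j assume l: "l < dim_row (L * G)" and jl: "j < l"
    then have l': "l < n" using LGc by auto
    then have j': "j < n" "j \<noteq> n'" using jl n by auto
    have "l - j = Suc (l - Suc j)" using jl by simp
    then show "(L * G) $$ (l,j) = 0" using LGent[OF l' j'(1)] jl j' l' by simp
  qed
  have detLG: "det (L * G) = d"
  proof -
    have "det (L * G) = prod_list (diag_mat (L * G))" by (rule det_upper_triangular[OF ut LGc])
    also have "diag_mat (L * G) = map (\<lambda>i. (L * G) $$ (i,i)) [0..<n'] @ [(L * G) $$ (n', n')]"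
      unfolding diag_mat_def using LGc n by auto
    also have "prod_list \<dots> = (L * G) $$ (n', n')"
      using prod_list_ones[of n' "\<lambda>i. (L * G) $$ (i,i)"] LGent n by simp
    also have "\<dots> = d" unfolding d_def using LGent[of n' n'] n by simp
    finally show ?thesis .
  qed
  have "det (L * G) = det L * det G" by (rule det_mult[OF Lc Gc])
  then have detG: "det G = d" using detLG detL by simp
  have "det (mat n n (\<lambda>(i,j). c i j + c i (Suc j))) = det An * det G" unfolding AG by (rule det_mult[OF An Gc])
  also have "\<dots> = d" using dA detG unfolding An_def by simp
  also have "d = (\<Sum>s = 0..n. b s)"
  proof -
    have "\<And>p. p \<in> {0..<n} \<Longrightarrow> (-1::rat)^(n' - p) * y p = b p"
    proof -
      fix p assume "p \<in> {0..<n}"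
      then have p: "p \<le> n'" using n by simp
      have "(-1::rat)^(n' - p) * (-1)^p = (-1)^n'" using p by (simp add: power_add[symmetric])
      then have "(-1::rat)^(n' - p) * y p = - ((-1)^n * (-1)^n') * b p"
        unfolding y_def by (simp add: mult_ac)
      also have "(-1::rat)^n * (-1)^n' = -1" using n neg1_sq[of n'] by simp
      finally show "(-1::rat)^(n' - p) * y p = b p" by simp
    qed
    then have "(\<Sum>p \<in> {0..<n}. (-1::rat)^(n' - p) * y p) = (\<Sum>p \<in> {0..<n}. b p)" by (rule sum.cong[OF refl])
    then show ?thesis unfolding d_def using bn
      by (simp add: atLeastLessThanSuc_atLeastAtMost[symmetric] n add.commute)
  qed
  finally show ?thesis .
qed


theorem theorem9:
  fixes n k \<beta> :: nat
  assumes "n \<ge> 1" and "k \<ge> 2" and "\<beta> \<le> k - 1"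
  shows "det (mat n n (\<lambda>(i, j). gen_catalan ((k - 1) * i + j + \<beta>) k
                                 + gen_catalan ((k - 1) * i + j + \<beta> + 1) k))
         = of_nat (\<Sum>s = 0..n. ((s + \<beta>) div (k - 1) + n) choose (n - s))"
proof -
  define r where "r = k - 1"
  have r: "0 < r" using assms(2) unfolding r_def by simp
  have b: "\<beta> \<le> r" using assms(3) unfolding r_def by simp
  define c where "c = (\<lambda>i j. gen_catalan (r * i + j + \<beta>) k)"
  have cR: "\<And>i j. c i j = of_nat (R r (r * i + j + \<beta>) 0)"
    unfolding c_def r_def using cat_R[OF assms(2)] by simp
  have KIc: "\<And>i m. i \<le> m \<Longrightarrow> (\<Sum>s = 0..m. (-1)^s * of_nat (((s + \<beta>) div r + m) choose (m - s)) * c i s)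
       = (if i = m then (-1)^m else (0::rat))"
    unfolding cR by (rule KI[OF r b])
  have det1: "\<And>m. det (mat m m (\<lambda>(i,j). c i j)) = 1"
  proof -
    fix m show "det (mat m m (\<lambda>(i,j). c i j)) = 1"
    proof (induction m)
      case 0 then show ?case by (rule det_mat0)
    next
      case (Suc m)
      have "det (mat (Suc m) (Suc m) (\<lambda>(i,j). c i j)) = det (mat m m (\<lambda>(i,j). c i j))"
      proof (rule det_step[where xx = "\<lambda>s. (-1)^s * of_nat (((s + \<beta>) div r + m) choose (m - s))"])
        fix i assume "i \<le> m"
        then show "(\<Sum>s = 0..m. (-1)^s * of_nat (((s + \<beta>) div r + m) choose (m - s)) * c i s) = (if i = m then (-1)^m else 0)"
          by (rule KIc)
      qed simp
      then show ?case using Suc.IH by simp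
    qed
  qed
  obtain n' where n: "n = Suc n'" using assms(1) by (cases n) auto
  have "det (mat n n (\<lambda>(i,j). c i j + c i (Suc j))) = (\<Sum>s = 0..n. of_nat (((s + \<beta>) div r + n) choose (n - s)))"
  proof (rule main_det[OF n])
    fix i assume "i < n"
    then show "(\<Sum>s = 0..n. (-1)^s * of_nat (((s + \<beta>) div r + n) choose (n - s)) * c i s) = 0"
      using KIc[of i n] by simp
  qed (simp_all add: det1)
  moreover have "mat n n (\<lambda>(i, j). gen_catalan ((k - 1) * i + j + \<beta>) k + gen_catalan ((k - 1) * i + j + \<beta> + 1) k)
      = mat n n (\<lambda>(i,j). c i j + c i (Suc j))"
    unfolding c_def r_def by (simp add: add_ac)
  ultimately show ?thesis unfolding r_def by simp
qed

end
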